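(* For every $\mu$ in the upper half-plane, \[J_{\frac{2\mu+1}{2}}\!\left(e^{\pi i\mu}\right)=J_{2\mu}\!\left(e^{\pi i\mu}\right)-J_{2\mu}\!\left(-e^{\pi i\mu}\right).\]
   Context: Let $J(z)=\log|z|\log|1-z|$ and $B_3(x)=x^3-\frac32x^2+\frac12x$. For $\sigma$ in the upper half-plane, with $Q=e^{2\pi i\sigma}$, and $z\in\mathbb{C}^*$ not in $Q^{\mathbb{Z}}$, define \[J_\sigma(z)=\sum_{n=0}^\infty J(zQ^n)-\sum_{n=1}^\infty J(z^{-1}Q^n)+\frac13\log^2|Q|\,B_3\!\left(\frac{\log|z|}{\log|Q|}\right).\] *)

theory Defs
  imports "HOL-Analysis.Analysis"
begin

definition J :: "complex \<Rightarrow> real" where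
  "J z = ln (cmod z) * ln (cmod (1 - z))"

definition B3 :: "real \<Rightarrow> real" where
  "B3 x = x ^ 3 - 3 / 2 * x ^ 2 + 1 / 2 * x"

definition Qof :: "complex \<Rightarrow> complex" where
  "Qof \<sigma> = exp (2 * pi * \<i> * \<sigma>)"

definition Jsig :: "complex \<Rightarrow> complex \<Rightarrow> real" where
  "Jsig \<sigma> z =
     (let Q = Qof \<sigma> in
       (\<Sum>n. J (z * Q ^ n)) - (\<Sum>n. J (inverse z * Q ^ (Suc n)))
       + 1 / 3 * (ln (cmod Q)) ^ 2 * B3 (ln (cmod z) / ln (cmod Q)))"

end

theory Submission
  imports Defs
begin

lemma J_bound:
  assumes "0 < cmod w" "cmod w \<le> 1/2"
  shows "\<bar>J w\<bar> \<le> 4 * sqrt (cmod w)"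
proof -
  define x where "x = cmod w"
  have x0: "0 < x" "x \<le> 1/2" using assms x_def by auto
  have a1: "1 - x \<le> cmod (1 - w)" unfolding x_def
    by (metis norm_one norm_triangle_ineq2)
  have a2: "cmod (1 - w) \<le> 1 + x" unfolding x_def
    by (metis norm_one norm_triangle_ineq4)
  have p: "0 < 1 - x" using x0 by simp
  have u: "ln (cmod (1 - w)) \<le> x"
    using ln_add_one_self_le_self[of x] x0 a2 p a1
    by (smt (verit) ln_le_cancel_iff)
  have l0: "- x - 2 * x\<^sup>2 \<le> ln (1 - x)" using ln_one_minus_pos_lower_bound[of x] x0 by simp
  have "2 * x\<^sup>2 \<le> x" using x0 by (simp add: power2_eq_square)
  hence l: "- 2 * x \<le> ln (cmod (1 - w))"
    using l0 a1 p by (smt (verit) ln_le_cancel_iff)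
  have h1: "\<bar>ln (cmod (1 - w))\<bar> \<le> 2 * x" using u l x0 by linarith
  have sx: "0 < sqrt x" using x0 by simp
  have lnx: "ln x < 0" using x0 by simp
  have "ln (1 / sqrt x) \<le> 1 / sqrt x - 1" using ln_le_minus_one[of "1/sqrt x"] sx by simp
  moreover have "ln (1 / sqrt x) = - ln x / 2"
    using x0 sx by (simp add: ln_div ln_sqrt)
  ultimately have h2: "\<bar>ln x\<bar> \<le> 2 / sqrt x" using lnx by (simp add: field_simps)
  have "\<bar>J w\<bar> = \<bar>ln x\<bar> * \<bar>ln (cmod (1 - w))\<bar>" unfolding J_def x_def by (simp add: abs_mult)
  also have "\<dots> \<le> (2 / sqrt x) * (2 * x)"
    using h1 h2 by (intro mult_mono) auto
  also have "\<dots> = 4 * sqrt x" using sx x0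
    by (simp add: field_simps)
  finally show ?thesis unfolding x_def .
qed

lemma J_summable:
  fixes w :: "nat \<Rightarrow> complex" and m :: "nat \<Rightarrow> nat"
  assumes r: "0 < r" "r < 1" and w: "\<And>n. cmod (w n) = r ^ m n" and mn: "\<And>n. n \<le> m n"
  shows "summable (\<lambda>n. J (w n))"
proof (rule summable_comparison_test_ev)
  show "summable (\<lambda>n. 4 * sqrt r ^ n)"
    using r by (intro summable_mult summable_geometric) auto
  have "eventually (\<lambda>n. r ^ n \<le> 1/2) sequentially"
  proof -
    have "(\<lambda>n. r ^ n) \<longlonglongrightarrow> 0" using LIMSEQ_power_zero[of r] r by simp
    from order_tendstoD(2)[OF this, of "1/2"] show ?thesis by (simp add: less_imp_le eventually_mono)
  qed
  then show "eventually (\<lambda>n. norm (J (w n)) \<le> 4 * sqrt r ^ n) sequentially"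
  proof eventually_elim
    case (elim n)
    have le: "r ^ m n \<le> r ^ n" using r mn by (simp add: power_decreasing)
    have "norm (J (w n)) \<le> 4 * sqrt (cmod (w n))"
      using J_bound[of "w n"] w r le elim by simp
    also have "\<dots> \<le> 4 * sqrt (r ^ n)" using w le by simp
    also have "\<dots> = 4 * sqrt r ^ n" by (simp add: real_sqrt_power)
    finally show ?case .
  qed
qed

lemma norm_lem: "cmod (c * q ^ k) = cmod c * cmod q ^ k" by (simp add: norm_mult norm_power)

theorem mainTheorem16:
  fixes \<mu> :: complex
  assumes "Im \<mu> > 0"
  shows "Jsig ((2 * \<mu> + 1) / 2) (exp (pi * \<i> * \<mu>))
       = Jsig (2 * \<mu>) (exp (pi * \<i> * \<mu>)) - Jsig (2 * \<mu>) (- exp (pi * \<i> * \<mu>))"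
proof -
  define q where "q = exp (pi * \<i> * \<mu>)"
  define r where "r = cmod q"
  have r_eq: "r = exp (- pi * Im \<mu>)" unfolding r_def q_def by simp
  have r0: "0 < r" "r < 1" using assms unfolding r_eq by auto
  have q0: "q \<noteq> 0" unfolding q_def by simp
  have lnr: "ln r \<noteq> 0" using r0 by simp
  have Q1: "Qof ((2 * \<mu> + 1) / 2) = - (q ^ 2)"
  proof -
    have "2 * pi * \<i> * ((2 * \<mu> + 1) / 2) = 2 * (pi * \<i> * \<mu>) + pi * \<i>"
      by (simp add: field_simps)
    then have "Qof ((2 * \<mu> + 1) / 2) = exp (2 * (pi * \<i> * \<mu>) + pi * \<i>)"
      unfolding Qof_def by simp
    also have "\<dots> = - (q ^ 2)" unfolding q_def
      by (simp add: exp_add exp_of_nat_mult[symmetric])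
    finally show ?thesis .
  qed
  have Q2: "Qof (2 * \<mu>) = q ^ 4"
  proof -
    have "Qof (2 * \<mu>) = exp (of_nat 4 * (pi * \<i> * \<mu>))"
      unfolding Qof_def by (simp add: algebra_simps)
    also have "\<dots> = q ^ 4" unfolding q_def by (rule exp_of_nat_mult)
    finally show ?thesis .
  qed
  define f where "f n = J (q * (- (q^2)) ^ n)" for n
  define g where "g n = J (inverse q * (- (q^2)) ^ Suc n)" for n
  define a where "a n = J (q * (q^4) ^ n)" for n
  define b where "b n = J (inverse q * (q^4) ^ Suc n)" for n
  define c where "c n = J (- q * (q^4) ^ n)" for n
  define d where "d n = J (inverse (- q) * (q^4) ^ Suc n)" for n
  have sf: "summable f" unfolding f_def
    by (rule J_summable[OF r0, where m="\<lambda>n. 2*n+1"]) (auto simp: norm_mult norm_power r_def power_mult power_add)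
  have nI: "cmod (inverse q * z ^ Suc n) = r ^ (k * n + (k - 1))" if "cmod z = r ^ k" "k \<ge> 1" for z k n
  proof -
    have "cmod (inverse q * z ^ Suc n) = inverse r * (r ^ k) ^ Suc n"
      using that by (simp add: norm_mult norm_power norm_inverse r_def)
    also have "\<dots> = inverse r * r ^ (k * n + (k - 1) + 1)"
      using that by (simp add: power_mult[symmetric] mult.commute power_add)
    also have "\<dots> = r ^ (k * n + (k - 1))" using r0 by simp
    finally show ?thesis .
  qed
  have sg: "summable g" unfolding g_def
    by (rule J_summable[OF r0, where m="\<lambda>n. 2*n+1"]) (use nI[of "-(q^2)" 2] in \<open>auto simp: norm_power r_def\<close>)
  have sa: "summable a" unfolding a_def
    by (rule J_summable[OF r0, where m="\<lambda>n. 4*n+1"]) (auto simp: norm_mult norm_power r_def power_mult power_add)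
  have sb: "summable b" unfolding b_def
    by (rule J_summable[OF r0, where m="\<lambda>n. 4*n+3"]) (use nI[of "q^4" 4] in \<open>auto simp: norm_power r_def\<close>)
  have sc: "summable c" unfolding c_def
    by (rule J_summable[OF r0, where m="\<lambda>n. 4*n+1"]) (auto simp: norm_mult norm_power r_def power_mult power_add)
  have sd: "summable d" unfolding d_def
    by (rule J_summable[OF r0, where m="\<lambda>n. 4*n+3"])
      (use nI[of "q^4" 4] in \<open>auto simp: norm_power r_def norm_mult norm_inverse\<close>)
  have LHS: "Jsig ((2 * \<mu> + 1) / 2) q = suminf f - suminf g"
  proof -
    have "cmod (- (q ^ 2)) = r ^ 2" by (simp add: r_def norm_power)
    hence "ln (cmod q) / ln (cmod (- (q ^ 2))) = 1/2" using lnr r0 by (simp add: ln_realpow r_def[symmetric])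
    moreover have "B3 (1/2) = 0" by (simp add: B3_def power2_eq_square power3_eq_cube)
    ultimately show ?thesis unfolding Jsig_def Q1 Let_def f_def g_def by simp
  qed
  have RHS: "Jsig (2 * \<mu>) q - Jsig (2 * \<mu>) (- q) = (suminf a - suminf b) - (suminf c - suminf d)"
    unfolding Jsig_def Q2 Let_def a_def b_def c_def d_def by simp
  have e1: "(- (q^2)) ^ (2*m) = (q^4) ^ m" for m
    by (simp add: power_mult power_mult_distrib power_minus_even)
  have h: "(f (2*m) - g (2*m)) + (f (2*m+1) - g (2*m+1)) = (a m - b m) - (c m - d m)" for m
  proof -
    have iq: "inverse q * q^2 = q" using q0 by (simp add: power2_eq_square)
    have iq3: "inverse q * q^4 = q^3" using q0 by (simp add: eval_nat_numeral)
    have q4: "q^4 = q^2 * q^2" by (simp add: eval_nat_numeral)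
    have E1: "q * (- (q^2)) ^ (2*m) = q * (q^4)^m" using e1 by simp
    have E2: "inverse q * (- (q^2)) ^ Suc (2*m) = - q * (q^4)^m"
    proof -
      have "inverse q * (- (q^2)) ^ Suc (2*m) = - (inverse q * q^2) * (q^4)^m"
        by (simp only: power_Suc e1) simp
      then show ?thesis using iq by simp
    qed
    have E3: "q * (- (q^2)) ^ (2*m+1) = inverse (- q) * (q^4) ^ Suc m"
    proof -
      have "q * (- (q^2)) ^ (2*m+1) = - (q * q^2) * (q^4)^m"
        by (simp only: Suc_eq_plus1[symmetric] power_Suc e1) simp
      moreover have "inverse (- q) * (q^4) ^ Suc m = - (inverse q * q^4) * (q^4)^m"
        by (simp only: power_Suc) simp
      moreover have "q * q^2 = q^3" by (simp add: eval_nat_numeral)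
      ultimately show ?thesis using iq3 by simp
    qed
    have E4: "inverse q * (- (q^2)) ^ Suc (2*m+1) = inverse q * (q^4) ^ Suc m"
    proof -
      have "(- (q^2)) ^ Suc (2*m+1) = (- (q^2)) ^ (2*(m+1))" by simp
      then show ?thesis using e1[of "m+1"] by simp
    qed
    show ?thesis unfolding f_def g_def a_def b_def c_def d_def
      by (simp only: E1 E2 E3 E4)
  qed
  have "(\<lambda>n. f n - g n) sums (suminf f - suminf g)"
    using sf sg by (intro sums_diff summable_sums)
  from sums_group[OF this, of 2]
  have "(\<lambda>m. (a m - b m) - (c m - d m)) sums (suminf f - suminf g)"
    using h by (simp add: mult.commute)
  moreover have "(\<lambda>m. (a m - b m) - (c m - d m)) sums ((suminf a - suminf b) - (suminf c - suminf d))"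
    using sa sb sc sd by (intro sums_diff summable_sums)
  ultimately have "suminf f - suminf g = (suminf a - suminf b) - (suminf c - suminf d)"
    using sums_unique2 by blast
  then show ?thesis using LHS RHS unfolding q_def by simp
qed

end
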